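(* Let $t > 0$. Let $(e,r)$ denote the element of $\mathcal{U}_t$ that is crossed last by $X$ during $[0,t]$, and let $p(e^+)$ denote the parent of $e^+$. Then, conditionally on $e^+\neq\phi$ and $H_{t,p(e^+)}<\infty$, almost surely $\mathcal{U}_t \setminus \mathcal{U}_{H_{t,p(e^+)}}$ contains at most two elements.
   Context: $G$ is an infinite rooted tree (root $\phi$) of uniformly bounded degree each of whose vertices has at least two offspring; the parent of a non-root vertex is its neighbour closer to $\phi$. For an edge $e$, $e^+$ is its endpoint closer to $\phi$ and $e^-$ the other. Fix $T>0$. A bar is $(e,h)\in E(G)\times[0,T)$ with joints $(e^+,h),(e^-,h)$. Under $\mathbb{P}_T$, $\mathcal{B}$ is a Poisson process of bars of intensity one w.r.t. counting $\times$ Lebesgue measure. The meander $X:[0,\infty)\to V(G)\times[0,T)$ starts at $(\phi,0)$, moves from $(v,h)$ as $t\mapsto(v,(h+t)\bmod T)$ until reaching a joint of a bar in $\mathcal{B}$, then jumps (crosses the bar) to the other joint and continues likewise; it is right-continuous with left limits. $Y$ is the projection of $X$ to $V(G)$. $H_A=\inf\{u\ge0:Y(u)\in A\}$, $H_{s,A}=\inf\{u\ge s:Y(u)\in A\}$ ($\inf\emptyset=\infty$), singletons written without braces. For $t>0$, $\mathcal{U}_t$ is the set of bars $(e,r)$ crossed by $X$ during $[0,t]$ such that: $H_{e^+}<H_{e^-}<t$; $\{u\in[0,t]:Y(u)=e^+\}=[H_{e^+},H_{e^-})$; $H_{e^-}-H_{e^+}\le T/2$; and $\{u\in[0,t):Y(u)=e^-\}$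 is an interval with right endpoint strictly less than $t$. *)

theory Defs
  imports "HOL-Probability.Probability"
begin

text \<open>The root is rt, par v is the parent of
a non-root vertex v (par rt = rt by convention). The edges of G are exactly the
pairs {par v, v} for v distinct from rt; we name such an edge by its far endpoint v,
so e^+ = par e and e^- = e.\<close>

definition rooted_tree :: "('v \<Rightarrow> 'v) \<Rightarrow> 'v \<Rightarrow> bool" where
  "rooted_tree par rt \<longleftrightarrow> par rt = rt \<and> (\<forall>v. \<exists>n. (par ^^ n) v = rt)"

definition children :: "('v \<Rightarrow> 'v) \<Rightarrow> 'v \<Rightarrow> 'v \<Rightarrow> 'v set" where
  "children par rt v = {w. w \<noteq> rt \<and> par w = v}"

definition bounded_degree :: "('v \<Rightarrow> 'v) \<Rightarrow> 'v \<Rightarrow> bool" where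
  "bounded_degree par rt \<longleftrightarrow>
     (\<exists>D::nat. \<forall>v. finite (children par rt v) \<and> card (children par rt v) \<le> D)"

definition at_least_two_offspring :: "('v \<Rightarrow> 'v) \<Rightarrow> 'v \<Rightarrow> bool" where
  "at_least_two_offspring par rt \<longleftrightarrow> (\<forall>v. infinite (children par rt v) \<or> card (children par rt v) \<ge> 2)"

text \<open>On each edge (named by its far endpoint v) the bars form a Poisson process of
intensity one on [0,T): a Poisson(T) number N of points, which are i.i.d. uniform on
[0,T). Edges are independent. A sample is omega :: 'v => nat * (nat => real).\<close>

definition edge_pp :: "real \<Rightarrow> (nat \<times> (nat \<Rightarrow> real)) measure" where
  "edge_pp T = measure_pmf (poisson_pmf T) \<Otimes>\<^sub>M
               (\<Pi>\<^sub>M i\<in>(UNIV::nat set). uniform_measure lborel {0..<T})"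

definition bar_measure :: "'v \<Rightarrow> real \<Rightarrow> ('v \<Rightarrow> nat \<times> (nat \<Rightarrow> real)) measure" where
  "bar_measure rt T = (\<Pi>\<^sub>M v\<in>(UNIV - {rt}). edge_pp T)"

text \<open>The set of bars (e,h): e names the edge {par e, e}, h the height.\<close>
definition bars :: "'v \<Rightarrow> ('v \<Rightarrow> nat \<times> (nat \<Rightarrow> real)) \<Rightarrow> ('v \<times> real) set" where
  "bars rt \<omega> = {(v, snd (\<omega> v) i) | v i. v \<noteq> rt \<and> i < fst (\<omega> v)}"

definition rmod :: "real \<Rightarrow> real \<Rightarrow> real" where
  "rmod x T = x - T * of_int \<lfloor>x / T\<rfloor>"

text \<open>Time needed (strictly positive) to move from height h up (mod T) to height h'.\<close>
definition hitdelay :: "real \<Rightarrow> real \<Rightarrow> real \<Rightarrow> real" where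
  "hitdelay T h h' = (if rmod (h' - h) T = 0 then T else rmod (h' - h) T)"

definition incident :: "('v \<Rightarrow> 'v) \<Rightarrow> ('v \<times> real) set \<Rightarrow> 'v \<Rightarrow> ('v \<times> real) set" where
  "incident par B v = {b \<in> B. fst b = v \<or> par (fst b) = v}"

definition other :: "('v \<Rightarrow> 'v) \<Rightarrow> 'v \<Rightarrow> 'v \<Rightarrow> 'v" where
  "other par v e = (if e = v then par e else e)"

text \<open>States: (vertex, height, time, bar crossed to get there). From (v,h,tau) the
meander moves up in height until the first joint of a bar at v, and crosses it.\<close>
type_synonym 'v mstate = "'v \<times> real \<times> real \<times> ('v \<times> real) option"

definition next_jump :: "('v \<Rightarrow> 'v) \<Rightarrow> real \<Rightarrow> ('v \<times> real) set \<Rightarrow> 'v mstate \<Rightarrow> 'v mstate option" where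
  "next_jump par T B st = (case st of (v, h, \<tau>, _) \<Rightarrow>
     (if \<exists>b\<in>incident par B v. \<forall>b'\<in>incident par B v. hitdelay T h (snd b) \<le> hitdelay T h (snd b')
      then (let b = (SOME b. b\<in>incident par B v \<and>
                        (\<forall>b'\<in>incident par B v. hitdelay T h (snd b) \<le> hitdelay T h (snd b')))
            in Some (other par v (fst b), snd b, \<tau> + hitdelay T h (snd b), Some b))
      else None))"

primrec jumps :: "('v \<Rightarrow> 'v) \<Rightarrow> 'v \<Rightarrow> real \<Rightarrow> ('v \<times> real) set \<Rightarrow> nat \<Rightarrow> 'v mstate option" where
  "jumps par rt T B 0 = Some (rt, 0, 0, None)"
| "jumps par rt T B (Suc k) =
     (case jumps par rt T B k of None \<Rightarrow> None | Some st \<Rightarrow> next_jump par T B st)"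

definition jtime :: "'v mstate option \<Rightarrow> real" where
  "jtime st = fst (snd (snd (the st)))"

text \<open>The meander X (right-continuous). On the (null) event of accumulation of
jump times, X is left unspecified after the accumulation point.\<close>
definition meander :: "('v \<Rightarrow> 'v) \<Rightarrow> 'v \<Rightarrow> real \<Rightarrow> ('v \<times> real) set \<Rightarrow> real \<Rightarrow> 'v \<times> real" where
  "meander par rt T B u =
     (let P = (\<lambda>k. jumps par rt T B k \<noteq> None \<and> jtime (jumps par rt T B k) \<le> u \<and>
                  (jumps par rt T B (Suc k) = None \<or> u < jtime (jumps par rt T B (Suc k))))
      in if \<exists>k. P k then
           (case the (jumps par rt T B (SOME k. P k)) of (v, h, \<tau>, _) \<Rightarrow> (v, rmod (h + (u - \<tau>)) T))
         else undefined)"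

definition Yproj :: "('v \<Rightarrow> 'v) \<Rightarrow> 'v \<Rightarrow> real \<Rightarrow> ('v \<times> real) set \<Rightarrow> real \<Rightarrow> 'v" where
  "Yproj par rt T B u = fst (meander par rt T B u)"

text \<open>Hitting times H_{s,A} (H_A = H_{0,A}), with inf of the empty set = infinity.\<close>
definition hit :: "('v \<Rightarrow> 'v) \<Rightarrow> 'v \<Rightarrow> real \<Rightarrow> ('v \<times> real) set \<Rightarrow> real \<Rightarrow> 'v set \<Rightarrow> ereal" where
  "hit par rt T B s A = Inf {ereal u | u. s \<le> u \<and> Yproj par rt T B u \<in> A}"

definition crossed_at :: "('v \<Rightarrow> 'v) \<Rightarrow> 'v \<Rightarrow> real \<Rightarrow> ('v \<times> real) set \<Rightarrow> real \<Rightarrow> nat \<Rightarrow> 'v \<times> real \<Rightarrow> bool" where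
  "crossed_at par rt T B t k b \<longleftrightarrow>
     (\<exists>v h \<tau>. jumps par rt T B k = Some (v, h, \<tau>, Some b) \<and> \<tau> \<le> t)"

definition Uset :: "('v \<Rightarrow> 'v) \<Rightarrow> 'v \<Rightarrow> real \<Rightarrow> ('v \<times> real) set \<Rightarrow> real \<Rightarrow> ('v \<times> real) set" where
  "Uset par rt T B t = {(e, r). (\<exists>k. crossed_at par rt T B t k (e, r)) \<and>
     (let Hp = hit par rt T B 0 {par e}; Hm = hit par rt T B 0 {e} in
        Hp < Hm \<and> Hm < ereal t \<and>
        {u. 0 \<le> u \<and> u \<le> t \<and> Yproj par rt T B u = par e} = {real_of_ereal Hp ..< real_of_ereal Hm} \<and>
        Hm - Hp \<le> ereal (T / 2) \<and>
        (let S = {u. 0 \<le> u \<and> u < t \<and> Yproj par rt T B u = e} in is_interval S \<and> Sup S < t))}"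

definition last_U :: "('v \<Rightarrow> 'v) \<Rightarrow> 'v \<Rightarrow> real \<Rightarrow> ('v \<times> real) set \<Rightarrow> real \<Rightarrow> 'v \<times> real \<Rightarrow> bool" where
  "last_U par rt T B t b \<longleftrightarrow> b \<in> Uset par rt T B t \<and>
     (\<exists>k. crossed_at par rt T B t k b \<and>
        (\<forall>k' b'. k < k' \<and> crossed_at par rt T B t k' b' \<longrightarrow> b' \<notin> Uset par rt T B t))"

end

theory Submission
  imports Defs
begin

lemma rmod_nonneg: "T > 0 \<Longrightarrow> rmod x T \<ge> 0"
proof -
  assume T: "T > 0"
  have "of_int \<lfloor>x / T\<rfloor> \<le> x / T" by (rule of_int_floor_le)
  hence "T * of_int \<lfloor>x / T\<rfloor> \<le> T * (x / T)" using T by (intro mult_left_mono) auto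
  thus ?thesis using T by (simp add: rmod_def)
qed

lemma hitdelay_pos: "T > 0 \<Longrightarrow> hitdelay T h h' > 0"
  using rmod_nonneg[of T "h' - h"] by (auto simp: hitdelay_def)

lemma next_jump_Some:
  assumes "next_jump par T B (v,h,\<tau>,ob) = Some st'"
  shows "\<exists>b\<in>incident par B v. st' = (other par v (fst b), snd b, \<tau> + hitdelay T h (snd b), Some b)"
proof -
  let ?Q = "\<lambda>b. b\<in>incident par B v \<and> (\<forall>b'\<in>incident par B v. hitdelay T h (snd b) \<le> hitdelay T h (snd b'))"
  have ex: "\<exists>b. ?Q b"
  proof (rule ccontr)
    assume "\<not> (\<exists>b. ?Q b)"
    hence nc: "\<not>(\<exists>b\<in>incident par B v. \<forall>b'\<in>incident par B v. hitdelay T h (snd b) \<le> hitdelay T h (snd b'))" by blast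
    have "next_jump par T B (v,h,\<tau>,ob) = None" unfolding next_jump_def by (simp only: prod.case if_not_P[OF nc])
    thus False using assms by simp
  qed
  hence st: "st' = (other par v (fst (SOME b. ?Q b)), snd (SOME b. ?Q b), \<tau> + hitdelay T h (snd (SOME b. ?Q b)), Some (SOME b. ?Q b))"
    using assms unfolding next_jump_def Let_def by (simp only: prod.case if_P[OF ex[unfolded Bex_def[symmetric]]]) auto
  from someI_ex[OF ex] st show ?thesis by blast
qed

lemma jumps_Suc_Some:
  assumes "jumps par rt T B (Suc k) = Some st'"
  shows "\<exists>v h \<tau> ob. jumps par rt T B k = Some (v,h,\<tau>,ob) \<and>
     (\<exists>b\<in>incident par B v. st' = (other par v (fst b), snd b, \<tau> + hitdelay T h (snd b), Some b))"
proof (cases "jumps par rt T B k")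
  case None thus ?thesis using assms by simp
next
  case (Some st)
  obtain v h \<tau> ob where "st = (v,h,\<tau>,ob)" by (cases st) auto
  thus ?thesis using assms Some next_jump_Some[of par T B v h \<tau> ob st'] by auto
qed

lemma par_fix: assumes "rooted_tree par rt" "par w = w" shows "w = rt"
proof -
  have "(par ^^ n) w = w" for n by (induction n) (use assms(2) in auto)
  moreover obtain n where "(par ^^ n) w = rt" using assms(1) unfolding rooted_tree_def by blast
  ultimately show ?thesis by simp
qed

lemma funpow_rt: "rooted_tree par rt \<Longrightarrow> (par ^^ n) rt = rt"
  by (induction n) (auto simp: rooted_tree_def)

locale MW =
  fixes par :: "'v \<Rightarrow> 'v" and rt :: 'v and T :: real and B :: "('v \<times> real) set"
  assumes tree: "rooted_tree par rt" and Tpos: "T > 0" and Bnr: "\<forall>b\<in>B. fst b \<noteq> rt"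
begin

declare jumps.simps(2)[simp del]

abbreviation J where "J k \<equiv> jumps par rt T B k"
definition vtx where "vtx k = fst (the (J k))"
definition tm where "tm k = jtime (J k)"
abbreviation Y where "Y \<equiv> Yproj par rt T B"
definition PP where "PP u k \<longleftrightarrow> J k \<noteq> None \<and> tm k \<le> u \<and> (J (Suc k) = None \<or> u < tm (Suc k))"
definition D where "D u \<longleftrightarrow> (\<exists>k. PP u k)"
definition Sub where "Sub x = {w. \<exists>n. (par ^^ n) w = x}"
definition adj where "adj a b \<longleftrightarrow> (b = par a \<and> a \<noteq> rt) \<or> (a = par b \<and> b \<noteq> rt)"

lemma J0: "J 0 = Some (rt, 0, 0, None)" by simp
lemma tm0: "tm 0 = 0" by (simp add: tm_def jtime_def)
lemma vtx0: "vtx 0 = rt" by (simp add: vtx_def)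

lemma step_struct:
  assumes "J (Suc k) = Some (v',h',\<tau>',ob)"
  shows "J k \<noteq> None \<and> tm k < tm (Suc k) \<and> vtx (Suc k) = v' \<and>
    (\<exists>b\<in>B. ob = Some b \<and> ((vtx k = fst b \<and> v' = par (fst b)) \<or> (vtx k = par (fst b) \<and> v' = fst b)))"
proof -
  obtain v h \<tau> ob0 b where Jk: "J k = Some (v,h,\<tau>,ob0)" and b: "b \<in> incident par B v"
    and st: "(v',h',\<tau>',ob) = (other par v (fst b), snd b, \<tau> + hitdelay T h (snd b), Some b)"
    using jumps_Suc_Some[OF assms] by blast
  have "tm k < tm (Suc k)" using Jk assms st hitdelay_pos[OF Tpos, of h "snd b"] by (simp add: tm_def jtime_def)
  moreover have "b \<in> B" "fst b = v \<or> par (fst b) = v" using b by (auto simp: incident_def)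
  ultimately show ?thesis using Jk assms st by (auto simp: vtx_def other_def)
qed

lemma step_adj: assumes "J (Suc k) \<noteq> None" shows "adj (vtx k) (vtx (Suc k))"
proof -
  obtain v' h' \<tau>' ob where "J (Suc k) = Some (v',h',\<tau>',ob)" using assms by (cases "J (Suc k)") auto
  from step_struct[OF this] obtain b where "b \<in> B" "vtx (Suc k) = v'"
    "(vtx k = fst b \<and> v' = par (fst b)) \<or> (vtx k = par (fst b) \<and> v' = fst b)" by blast
  thus ?thesis using Bnr unfolding adj_def by auto
qed

lemma J_None_Suc: "J k = None \<Longrightarrow> J (Suc k) = None" by (simp add: jumps.simps(2))

lemma J_mono: "J k \<noteq> None \<Longrightarrow> j \<le> k \<Longrightarrow> J j \<noteq> None"
proof (induction k)
  case 0 thus ?case by simp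
next
  case (Suc k) thus ?case
    by (metis J_None_Suc le_SucE)
qed

lemma tm_step: "J (Suc k) \<noteq> None \<Longrightarrow> tm k < tm (Suc k)"
proof -
  assume "J (Suc k) \<noteq> None"
  then obtain v' h' \<tau>' ob where "J (Suc k) = Some (v',h',\<tau>',ob)" by (cases "J (Suc k)") auto
  from step_struct[OF this] show ?thesis by blast
qed

lemma tm_mono: "J k \<noteq> None \<Longrightarrow> j < k \<Longrightarrow> tm j < tm k"
proof (induction k)
  case 0 thus ?case by simp
next
  case (Suc k)
  have "tm k < tm (Suc k)" using tm_step Suc.prems by blast
  moreover have "J k \<noteq> None" using J_mono Suc.prems by (metis le_SucI order_refl)
  ultimately show ?case using Suc by (metis less_SucE order.strict_trans)
qed

lemma tm_mono_le: "J k \<noteq> None \<Longrightarrow> j \<le> k \<Longrightarrow> tm j \<le> tm k"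
  using tm_mono by (metis le_less)

lemma tm_nonneg: "J k \<noteq> None \<Longrightarrow> 0 \<le> tm k"
  using tm_mono_le[of k 0] tm0 by simp

lemma PP_unique: "PP u k \<Longrightarrow> PP u k' \<Longrightarrow> k = k'"
proof -
  have *: "False" if "PP u k" "PP u k'" "k < k'" for k k'
  proof -
    have "J (Suc k) \<noteq> None" using that J_mono[of k' "Suc k"] by (auto simp: PP_def)
    hence "u < tm (Suc k)" using that by (auto simp: PP_def)
    moreover have "tm (Suc k) \<le> tm k'" using tm_mono_le[of k' "Suc k"] that by (auto simp: PP_def)
    ultimately show False using that by (auto simp: PP_def)
  qed
  show "PP u k \<Longrightarrow> PP u k' \<Longrightarrow> k = k'" using *[of k k'] *[of k' k] by (metis linorder_neqE_nat)
qed

lemma Y_PP: assumes "PP u k" shows "Y u = vtx k"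
proof -
  have P: "(\<lambda>k. J k \<noteq> None \<and> jtime (J k) \<le> u \<and> (J (Suc k) = None \<or> u < jtime (J (Suc k)))) = PP u"
    by (auto simp: PP_def tm_def fun_eq_iff)
  have ex: "\<exists>k. PP u k" using assms by blast
  have sm: "(SOME k. PP u k) = k" using assms PP_unique by (metis someI_ex)
  show ?thesis unfolding Yproj_def meander_def Let_def P using ex sm
    by (simp add: vtx_def split: prod.splits)
qed

lemma Y_notD: assumes "\<not> D u" shows "Y u = fst (undefined :: 'v \<times> real)"
proof -
  have P: "(\<lambda>k. J k \<noteq> None \<and> jtime (J k) \<le> u \<and> (J (Suc k) = None \<or> u < jtime (J (Suc k)))) = PP u"
    by (auto simp: PP_def tm_def fun_eq_iff)
  show ?thesis using assms unfolding Yproj_def meander_def Let_def P D_def by auto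
qed

lemma PP_tm: assumes "J k \<noteq> None" shows "PP (tm k) k"
proof -
  have "J (Suc k) = None \<or> tm k < tm (Suc k)" using tm_step by blast
  thus ?thesis using assms unfolding PP_def by simp
qed

lemma Y_tm: "J k \<noteq> None \<Longrightarrow> Y (tm k) = vtx k"
  using Y_PP PP_tm by blast

lemma below_tm: "J k \<noteq> None \<Longrightarrow> 0 \<le> u \<Longrightarrow> u < tm k \<Longrightarrow> \<exists>j<k. PP u j"
proof (induction k)
  case 0 thus ?case by (simp add: tm0)
next
  case (Suc k)
  have Jk: "J k \<noteq> None" using Suc.prems J_mono by (metis le_SucI order_refl)
  show ?case
  proof (cases "u < tm k")
    case True thus ?thesis using Suc Jk by (meson less_SucI)
  next
    case False thus ?thesis using Suc.prems Jk by (auto simp: PP_def)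
  qed
qed

lemma D_down: "D u \<Longrightarrow> 0 \<le> u' \<Longrightarrow> u' \<le> u \<Longrightarrow> D u'"
proof -
  assume "D u" "0 \<le> u'" "u' \<le> u"
  then obtain k where k: "PP u k" by (auto simp: D_def)
  show "D u'"
  proof (cases "tm k \<le> u'")
    case True
    have "PP u' k" using k True \<open>u' \<le> u\<close> unfolding PP_def by (meson le_less_trans)
    thus ?thesis unfolding D_def by blast
  next
    case False
    have Jk: "J k \<noteq> None" using k by (simp add: PP_def)
    from below_tm[OF Jk \<open>0 \<le> u'\<close>] False obtain j where "PP u' j" by auto
    thus ?thesis unfolding D_def by blast
  qed
qed

lemma PP_mono: "PP a i \<Longrightarrow> PP b j \<Longrightarrow> a \<le> b \<Longrightarrow> i \<le> j"
proof (rule ccontr)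
  assume a: "PP a i" "PP b j" "a \<le> b" "\<not> i \<le> j"
  hence "J (Suc j) \<noteq> None" using J_mono[of i "Suc j"] by (auto simp: PP_def)
  hence "b < tm (Suc j)" using a by (auto simp: PP_def)
  moreover have "tm (Suc j) \<le> tm i" using tm_mono_le[of i "Suc j"] a by (auto simp: PP_def)
  ultimately show False using a by (auto simp: PP_def)
qed

lemma Sub_self: "x \<in> Sub x" by (auto simp: Sub_def intro: exI[of _ 0])

lemma Sub_par: assumes "w \<in> Sub x" "w \<noteq> x" shows "par w \<in> Sub x"
proof -
  obtain n where n: "(par ^^ n) w = x" using assms by (auto simp: Sub_def)
  then obtain m where "n = Suc m" using assms by (cases n) auto
  hence "(par ^^ m) (par w) = x" using n by (simp add: funpow_Suc_right del: funpow.simps)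
  thus ?thesis by (auto simp: Sub_def)
qed

lemma Sub_child: assumes "par w \<in> Sub x" shows "w \<in> Sub x"
proof -
  obtain n where n: "(par ^^ n) (par w) = x" using assms by (auto simp: Sub_def)
  hence "(par ^^ Suc n) w = x" by (simp add: funpow_Suc_right del: funpow.simps)
  thus ?thesis unfolding Sub_def by blast
qed

lemma rt_Sub: "rt \<in> Sub x \<Longrightarrow> x = rt"
  using funpow_rt[OF tree] by (auto simp: Sub_def)

lemma Sub_antisym: assumes "x \<in> Sub y" "y \<in> Sub x" shows "x = y"
proof -
  obtain n where n: "(par ^^ n) x = y" using assms by (auto simp: Sub_def)
  obtain m where m: "(par ^^ m) y = x" using assms by (auto simp: Sub_def)
  have c: "(par ^^ (m + n)) x = x" using n m by (simp add: funpow_add)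
  show ?thesis
  proof (cases "m + n = 0")
    case True thus ?thesis using n by simp
  next
    case False
    have q: "(par ^^ (q * (m + n))) x = x" for q
    proof (induction q)
      case 0 thus ?case by simp
    next
      case (Suc q)
      have "(par ^^ (Suc q * (m + n))) x = (par ^^ (m+n)) ((par ^^ (q * (m + n))) x)"
        by (simp only: mult_Suc funpow_add o_apply)
      thus ?case using Suc c by simp
    qed
    obtain d where d: "(par ^^ d) x = rt" using tree unfolding rooted_tree_def by blast
    have "1 \<le> m + n" using False by presburger
    hence "d * 1 \<le> d * (m + n)" by (rule mult_left_mono) simp
    hence "d \<le> d * (m + n)" by simp
    then obtain r where r: "d * (m + n) = r + d" using le_iff_add by (metis add.commute)
    have "(par ^^ (d * (m + n))) x = rt" unfolding r funpow_add using d funpow_rt[OF tree] by simp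
    hence "x = rt" using q[of d] by simp
    thus ?thesis using n funpow_rt[OF tree] by simp
  qed
qed

lemma sibling_notSub: assumes "par a = par b" "a \<noteq> b" "b \<noteq> rt" shows "a \<notin> Sub b"
proof
  assume "a \<in> Sub b"
  hence "par b \<in> Sub b" using Sub_par assms by metis
  moreover have "b \<in> Sub (par b)" using Sub_child Sub_self by blast
  ultimately have "b = par b" using Sub_antisym by blast
  thus False using par_fix[OF tree] assms(3) by metis
qed

lemma exit_step: "a \<in> Sub x \<Longrightarrow> b \<notin> Sub x \<Longrightarrow> adj a b \<Longrightarrow> a = x \<and> b = par x"
  unfolding adj_def using Sub_par Sub_child by blast

lemma entry_step: "a \<notin> Sub x \<Longrightarrow> b \<in> Sub x \<Longrightarrow> adj a b \<Longrightarrow> b = x"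
  unfolding adj_def using Sub_par Sub_child by blast

lemma disc_exit: "J j \<noteq> None \<Longrightarrow> i \<le> j \<Longrightarrow> vtx i \<in> Sub x \<Longrightarrow> vtx j \<notin> Sub x \<Longrightarrow>
   \<exists>m. i \<le> m \<and> m < j \<and> vtx m = x \<and> vtx (Suc m) = par x"
proof (induction j)
  case 0 thus ?case by simp
next
  case (Suc j)
  show ?case
  proof (cases "i = Suc j")
    case True thus ?thesis using Suc by simp
  next
    case False
    hence ij: "i \<le> j" using Suc by simp
    have Jj: "J j \<noteq> None" using Suc.prems J_mono by (metis le_SucI order_refl)
    show ?thesis
    proof (cases "vtx j \<in> Sub x")
      case True
      thus ?thesis using exit_step[OF True Suc.prems(4) step_adj[OF Suc.prems(1)]] ij by blast
    next
      case False thus ?thesis using Suc.IH[OF Jj ij Suc.prems(3)] by (meson less_SucI)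
    qed
  qed
qed

lemma disc_entry: "J j \<noteq> None \<Longrightarrow> i \<le> j \<Longrightarrow> vtx i \<notin> Sub x \<Longrightarrow> vtx j \<in> Sub x \<Longrightarrow>
   \<exists>m. i < m \<and> m \<le> j \<and> vtx m = x"
proof (induction j)
  case 0 thus ?case by simp
next
  case (Suc j)
  show ?case
  proof (cases "i = Suc j")
    case True thus ?thesis using Suc by simp
  next
    case False
    hence ij: "i \<le> j" using Suc by simp
    have Jj: "J j \<noteq> None" using Suc.prems J_mono by (metis le_SucI order_refl)
    show ?thesis
    proof (cases "vtx j \<in> Sub x")
      case False
      hence "vtx (Suc j) = x" using entry_step[OF False Suc.prems(4) step_adj[OF Suc.prems(1)]] by simp
      thus ?thesis using ij by (intro exI[of _ "Suc j"]) auto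
    next
      case True thus ?thesis using Suc.IH[OF Jj ij Suc.prems(3)] by (meson le_SucI)
    qed
  qed
qed

lemma PP_J: "PP u k \<Longrightarrow> J k \<noteq> None" by (simp add: PP_def)

lemma after_PP: assumes "PP a i" "i < m" "J m \<noteq> None" shows "a < tm m"
proof -
  have "J (Suc i) \<noteq> None" using J_mono assms by (metis Suc_leI)
  hence "a < tm (Suc i)" using assms(1) unfolding PP_def by metis
  moreover have "tm (Suc i) \<le> tm m" using tm_mono_le assms by (metis Suc_leI)
  ultimately show ?thesis by simp
qed

lemma PP_le: "PP b j \<Longrightarrow> m \<le> j \<Longrightarrow> tm m \<le> b"
  using tm_mono_le[of j m] by (auto simp: PP_def)

lemma cont_exit:
  assumes "D b" "0 \<le> a" "a \<le> b" "Y a \<in> Sub x" "Y b \<notin> Sub x"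
  shows "(\<exists>u. a \<le> u \<and> u < b \<and> Y u = x) \<and> (\<exists>u. a < u \<and> u \<le> b \<and> Y u = par x)"
proof -
  obtain j where j: "PP b j" using assms by (auto simp: D_def)
  obtain i where i: "PP a i" using D_down[OF assms(1-3)] by (auto simp: D_def)
  have ij: "i \<le> j" using PP_mono[OF i j assms(3)] .
  obtain m where m: "i \<le> m" "m < j" "vtx m = x" "vtx (Suc m) = par x"
    using disc_exit[OF PP_J[OF j] ij] assms(4,5) Y_PP[OF i] Y_PP[OF j] by auto
  have JSm: "J (Suc m) \<noteq> None" using J_mono[OF PP_J[OF j]] m by simp
  have Jm: "J m \<noteq> None" using J_mono[OF PP_J[OF j]] m by simp
  have a1: "a < tm (Suc m)" using after_PP[OF i _ JSm] m by simp
  have b1: "tm (Suc m) \<le> b" using PP_le[OF j] m by simp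
  have lt: "tm m < tm (Suc m)" using tm_step[OF JSm] .
  let ?u = "max a (tm m)"
  have "PP ?u m" using Jm a1 lt unfolding PP_def by auto
  hence "Y ?u = x" using Y_PP m by simp
  moreover have "Y (tm (Suc m)) = par x" using Y_tm[OF JSm] m by simp
  ultimately show ?thesis using a1 b1 lt by (metis max.cobounded1 max_less_iff_conj order.strict_trans2 order_refl)
qed

lemma cont_entry:
  assumes "D b" "0 \<le> a" "a \<le> b" "Y a \<notin> Sub x" "Y b \<in> Sub x"
  shows "\<exists>u. a < u \<and> u \<le> b \<and> Y u = x"
proof -
  obtain j where j: "PP b j" using assms by (auto simp: D_def)
  obtain i where i: "PP a i" using D_down[OF assms(1-3)] by (auto simp: D_def)
  have ij: "i \<le> j" using PP_mono[OF i j assms(3)] .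
  obtain m where m: "i < m" "m \<le> j" "vtx m = x"
    using disc_entry[OF PP_J[OF j] ij] assms(4,5) Y_PP[OF i] Y_PP[OF j] by auto
  have Jm: "J m \<noteq> None" using J_mono[OF PP_J[OF j]] m by simp
  show ?thesis using after_PP[OF i m(1) Jm] PP_le[OF j m(2)] Y_tm[OF Jm] m(3) by blast
qed

abbreviation hh where "hh s A \<equiv> hit par rt T B s A"

lemma hit_ge: "ereal s \<le> hh s A"
  unfolding hit_def by (rule Inf_greatest) auto

lemma hit_le: "s \<le> u \<Longrightarrow> Y u \<in> A \<Longrightarrow> hh s A \<le> ereal u"
  unfolding hit_def by (rule Inf_lower) auto

lemma hit_before: "hh s A = ereal h \<Longrightarrow> s \<le> u \<Longrightarrow> u < h \<Longrightarrow> Y u \<notin> A"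
  using hit_le by fastforce

lemma notD_up: "\<not> D h \<Longrightarrow> 0 \<le> h \<Longrightarrow> h \<le> u \<Longrightarrow> \<not> D u"
  using D_down by blast

lemma hit_attained: assumes "0 \<le> s" "hh s A = ereal h" shows "s \<le> h \<and> Y h \<in> A"
proof -
  have sh: "s \<le> h" using hit_ge[of s A] assms by simp
  have ge: "h \<le> u" if "s \<le> u" "Y u \<in> A" for u using hit_le[OF that] assms by simp
  have "Y h \<in> A"
  proof (rule ccontr)
    assume nA: "Y h \<notin> A"
    have "\<exists>M>h. \<forall>u. s \<le> u \<and> Y u \<in> A \<longrightarrow> M \<le> u"
    proof (cases "D h")
      case True
      then obtain k where k: "PP h k" by (auto simp: D_def)
      show ?thesis
      proof (cases "J (Suc k) = None")
        case True
        have "\<not> (s \<le> u \<and> Y u \<in> A)" for u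
        proof
          assume u: "s \<le> u \<and> Y u \<in> A"
          hence "PP u k" using k ge[of u] True by (auto simp: PP_def)
          thus False using Y_PP k nA u by metis
        qed
        thus ?thesis by (intro exI[of _ "h+1"]) auto
      next
        case False
        have "tm (Suc k) \<le> u" if u: "s \<le> u" "Y u \<in> A" for u
        proof (rule ccontr)
          assume "\<not> tm (Suc k) \<le> u"
          hence "PP u k" using k ge[OF u] by (auto simp: PP_def)
          thus False using Y_PP k nA u by metis
        qed
        moreover have "h < tm (Suc k)" using k False by (simp add: PP_def)
        ultimately show ?thesis by blast
      qed
    next
      case False
      have "\<not> (s \<le> u \<and> Y u \<in> A)" for u
      proof
        assume u: "s \<le> u \<and> Y u \<in> A"
        hence "\<not> D u" using notD_up[OF False] ge[of u] sh assms(1) by auto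
        thus False using Y_notD False nA u by metis
      qed
      thus ?thesis by (intro exI[of _ "h+1"]) auto
    qed
    then obtain M where M: "M > h" "\<forall>u. s \<le> u \<and> Y u \<in> A \<longrightarrow> M \<le> u" by blast
    have "ereal M \<le> hh s A" unfolding hit_def by (rule Inf_greatest) (use M in auto)
    thus False using M assms by simp
  qed
  thus ?thesis using sh by simp
qed

abbreviation UU where "UU t \<equiv> Uset par rt T B t"

lemma U_mem: "(e',r') \<in> UU t \<longleftrightarrow> (\<exists>k. crossed_at par rt T B t k (e',r')) \<and>
   hh 0 {par e'} < hh 0 {e'} \<and> hh 0 {e'} < ereal t \<and>
   {u. 0 \<le> u \<and> u \<le> t \<and> Y u = par e'} = {real_of_ereal (hh 0 {par e'}) ..< real_of_ereal (hh 0 {e'})} \<and>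
   hh 0 {e'} - hh 0 {par e'} \<le> ereal (T/2) \<and>
   is_interval {u. 0 \<le> u \<and> u < t \<and> Y u = e'} \<and> Sup {u. 0 \<le> u \<and> u < t \<and> Y u = e'} < t"
  by (simp add: Uset_def Let_def)

lemma crossed_ne_rt: assumes "crossed_at par rt T B t k (e',r')" shows "e' \<noteq> rt"
proof -
  obtain v h \<tau> where Jk: "J k = Some (v,h,\<tau>,Some (e',r'))" using assms by (auto simp: crossed_at_def)
  then obtain k0 where k0: "k = Suc k0" by (cases k) auto
  from step_struct[of k0 v h \<tau> "Some (e',r')"] Jk k0 obtain b where "b \<in> B" "Some (e',r') = Some b" by blast
  thus ?thesis using Bnr by auto
qed

lemma U_facts: assumes "(e',r') \<in> UU t"
  shows "\<exists>hp hm. hh 0 {par e'} = ereal hp \<and> hh 0 {e'} = ereal hm \<and> 0 \<le> hp \<and> hp < hm \<and> hm < t \<and>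
     (\<forall>u. 0 \<le> u \<and> u \<le> t \<longrightarrow> (Y u = par e' \<longleftrightarrow> hp \<le> u \<and> u < hm)) \<and> Y hm = e' \<and>
     (\<forall>u. 0 \<le> u \<and> u < hm \<longrightarrow> Y u \<noteq> e') \<and> e' \<noteq> rt \<and> (\<exists>k. crossed_at par rt T B t k (e',r'))"
proof -
  note M = assms[unfolded U_mem]
  have g1: "ereal 0 \<le> hh 0 {par e'}" by (rule hit_ge)
  have g2: "ereal 0 \<le> hh 0 {e'}" by (rule hit_ge)
  obtain hm where hm: "hh 0 {e'} = ereal hm" using M g2 by (cases "hh 0 {e'}") auto
  obtain hp where hp: "hh 0 {par e'} = ereal hp" using M g1 by (cases "hh 0 {par e'}") auto
  have set: "{u. 0 \<le> u \<and> u \<le> t \<and> Y u = par e'} = {hp ..< hm}" using M hm hp by simp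
  have iff: "\<forall>u. 0 \<le> u \<and> u \<le> t \<longrightarrow> (Y u = par e' \<longleftrightarrow> hp \<le> u \<and> u < hm)"
  proof (intro allI impI)
    fix u assume "0 \<le> u \<and> u \<le> t"
    thus "(Y u = par e' \<longleftrightarrow> hp \<le> u \<and> u < hm)" using set by (simp add: set_eq_iff) (metis atLeastLessThan_iff)
  qed
  have "Y hm = e'" using hit_attained[of 0 "{e'}" hm] hm by simp
  moreover have "\<forall>u. 0 \<le> u \<and> u < hm \<longrightarrow> Y u \<noteq> e'" using hit_before[OF hm] by blast
  moreover have "e' \<noteq> rt" using M crossed_ne_rt by blast
  ultimately show ?thesis using M hm hp g1 iff by auto
qed

lemma crossing_time:
  assumes U: "(e',r') \<in> UU t" and c: "crossed_at par rt T B t k (e',r')" and Dt: "D t"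
  shows "hh 0 {e'} = ereal (tm k) \<and> J k \<noteq> None"
proof -
  obtain hp hm where F: "hh 0 {par e'} = ereal hp" "hh 0 {e'} = ereal hm" "0 \<le> hp" "hp < hm" "hm < t"
     "\<forall>u. 0 \<le> u \<and> u \<le> t \<longrightarrow> (Y u = par e' \<longleftrightarrow> hp \<le> u \<and> u < hm)" "Y hm = e'"
     "\<forall>u. 0 \<le> u \<and> u < hm \<longrightarrow> Y u \<noteq> e'" using U_facts[OF U] by blast
  obtain v h \<tau> where Jk: "J k = Some (v,h,\<tau>,Some (e',r'))" and tt: "\<tau> \<le> t" using c by (auto simp: crossed_at_def)
  then obtain k0 where k0: "k = Suc k0" by (cases k) auto
  have tmk: "tm k = \<tau>" using Jk by (simp add: tm_def jtime_def)
  from step_struct[of k0 v h \<tau> "Some (e',r')"] Jk k0 obtain b where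
    S: "J k0 \<noteq> None" "tm k0 < tm k" "vtx k = v" "Some (e',r') = Some b"
    "(vtx k0 = fst b \<and> v = par (fst b)) \<or> (vtx k0 = par (fst b) \<and> v = fst b)" by auto
  have Jk': "J k \<noteq> None" using Jk by simp
  have Ytk: "Y \<tau> = v" using Y_tm[OF Jk'] S tmk by simp
  have nn: "0 \<le> tm k0" using tm_nonneg S by blast
  have mid: "Y u = vtx k0" if "tm k0 \<le> u" "u < tm k" for u
  proof -
    have "PP u k0" using that S k0 Jk' unfolding PP_def by simp
    thus ?thesis by (rule Y_PP)
  qed
  have "\<tau> = hm"
  proof (cases "vtx k0 = e'")
    case True
    hence "v = par e'" using S by auto
    hence "\<tau> < hm" using F(6) Ytk tt nn S tmk by auto
    moreover have "Y (tm k0) = e'" using mid[of "tm k0"] S True by simp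
    hence "hm \<le> tm k0" using F(8) nn by force
    ultimately show ?thesis using S tmk by simp
  next
    case False
    hence vv: "vtx k0 = par e'" "v = e'" using S by auto
    have t0: "0 \<le> \<tau>" using nn S tmk by simp
    have "hm \<le> \<tau>"
    proof (rule ccontr)
      assume "\<not> hm \<le> \<tau>" thus False using F(8) t0 Ytk vv by auto
    qed
    moreover have "\<not> hm < \<tau>"
    proof
      assume lt: "hm < \<tau>"
      let ?u = "max (tm k0) hm"
      have "Y ?u = par e'" using mid[of ?u] lt S tmk vv by simp
      moreover have "0 \<le> ?u" "?u \<le> t" using nn lt tt S tmk by auto
      ultimately have "?u < hm" using F(6) by blast
      thus False by simp
    qed
    ultimately show ?thesis by simp
  qed
  thus ?thesis using F tmk Jk' by simp
qed

lemma U_mono: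
  assumes U: "(e',r') \<in> UU t" and tt: "t \<le> t'"
    and n1: "\<forall>u. t < u \<and> u \<le> t' \<longrightarrow> Y u \<noteq> par e'"
    and n2: "\<forall>u. t \<le> u \<and> u < t' \<longrightarrow> Y u \<noteq> e'"
  shows "(e',r') \<in> UU t'"
proof -
  note M = U[unfolded U_mem]
  have s1: "{u. 0 \<le> u \<and> u \<le> t' \<and> Y u = par e'} = {u. 0 \<le> u \<and> u \<le> t \<and> Y u = par e'}"
    using n1 tt by (auto, meson not_le)
  have s2: "{u. 0 \<le> u \<and> u < t' \<and> Y u = e'} = {u. 0 \<le> u \<and> u < t \<and> Y u = e'}"
  proof (rule Collect_cong)
    fix u show "(0 \<le> u \<and> u < t' \<and> Y u = e') = (0 \<le> u \<and> u < t \<and> Y u = e')"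
      using n2 tt by (cases "u < t") auto
  qed
  have c: "\<exists>k. crossed_at par rt T B t' k (e',r')" using M tt unfolding crossed_at_def by (meson order.trans)
  have "hh 0 {e'} < ereal t'" using M tt by (meson ereal_less_eq(3) less_le_trans)
  thus ?thesis unfolding U_mem s1 s2 using M c tt by auto
qed

lemma U_unique: assumes "(e',r1) \<in> UU t" "(e',r2) \<in> UU t" "D t" shows "r1 = r2"
proof -
  obtain k1 where k1: "crossed_at par rt T B t k1 (e',r1)" using assms U_mem by blast
  obtain k2 where k2: "crossed_at par rt T B t k2 (e',r2)" using assms U_mem by blast
  have a: "hh 0 {e'} = ereal (tm k1)" "J k1 \<noteq> None" using crossing_time[OF assms(1) k1 assms(3)] by auto
  have b: "hh 0 {e'} = ereal (tm k2)" "J k2 \<noteq> None" using crossing_time[OF assms(2) k2 assms(3)] by auto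
  have "tm k1 = tm k2" using a b by simp
  hence "k1 = k2" using tm_mono a b by (metis linorder_neqE_nat less_irrefl)
  thus ?thesis using k1 k2 by (auto simp: crossed_at_def)
qed

lemma main:
  assumes last: "last_U par rt T B t (e,r)" and pe0: "par e \<noteq> rt"
    and Hfin: "hh t {par (par e)} < \<infinity>" and t0: "0 < t"
  shows "finite (UU t - UU (real_of_ereal (hh t {par (par e)}))) \<and>
         card (UU t - UU (real_of_ereal (hh t {par (par e)}))) \<le> 2"
proof -
  define pe where "pe = par e"
  define ppe where "ppe = par pe"
  have "ereal t \<le> hh t {ppe}" by (rule hit_ge)
  then obtain H where H: "hh t {ppe} = ereal H" using Hfin unfolding ppe_def pe_def
    by (cases "hh t {par (par e)}") auto
  have HA: "t \<le> H \<and> Y H = ppe" using hit_attained[of t "{ppe}" H] H t0 by simp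
  have bef: "Y u \<noteq> ppe" if "t \<le> u" "u < H" for u using hit_before[OF H that] by simp
  have rH: "real_of_ereal (hh t {par (par e)}) = H" using H by (simp add: ppe_def pe_def)
  show ?thesis
  proof (cases "H = t")
    case True thus ?thesis unfolding rH by simp
  next
    case False
    hence tH: "t < H" using HA by simp
    have Dt: "D t"
    proof (rule ccontr)
      assume nd: "\<not> D t"
      hence "\<not> D H" using notD_up[OF nd] t0 tH by simp
      hence "Y t = Y H" using Y_notD nd by simp
      thus False using bef[of t] tH HA by simp
    qed
    have Du: "D u" if "0 \<le> u" "u \<le> t" for u using D_down[OF Dt that] .
    have DH: "D u" if "t \<le> u" "u < H" for u
    proof (rule ccontr)
      assume nd: "\<not> D u"
      hence "\<not> D H" using notD_up[OF nd] that t0 by simp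
      hence "Y u = Y H" using Y_notD nd by simp
      thus False using bef[OF that] HA by simp
    qed
    from last obtain k where eU: "(e,r) \<in> UU t" and ck: "crossed_at par rt T B t k (e,r)"
      and lastk: "\<forall>k' b'. k < k' \<and> crossed_at par rt T B t k' b' \<longrightarrow> b' \<notin> UU t"
      by (auto simp: last_U_def)
    obtain hp hm where Fe: "hh 0 {pe} = ereal hp" "hh 0 {e} = ereal hm" "0 \<le> hp" "hp < hm" "hm < t"
     "\<forall>u. 0 \<le> u \<and> u \<le> t \<longrightarrow> (Y u = pe \<longleftrightarrow> hp \<le> u \<and> u < hm)" "Y hm = e"
     "\<forall>u. 0 \<le> u \<and> u < hm \<longrightarrow> Y u \<noteq> e" "e \<noteq> rt"
      using U_facts[OF eU] unfolding pe_def by blast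
    have tmk: "tm k = hm" "J k \<noteq> None" using crossing_time[OF eU ck Dt] Fe(2) by auto
    have pe_rt: "pe \<noteq> rt" using pe0 pe_def by simp
    have Y0: "Y 0 = rt" using Y_tm[of 0] tm0 vtx0 by simp
    have ppe_ne: "pe \<noteq> ppe" unfolding ppe_def using par_fix[OF tree] pe_rt by metis
    have hm0: "0 \<le> hm" using Fe by simp
    have Yt: "Y t \<in> Sub pe"
    proof (rule ccontr)
      assume n: "Y t \<notin> Sub pe"
      have "Y hm \<in> Sub pe" using Fe(7) Sub_child Sub_self pe_def by blast
      from cont_exit[OF Dt hm0 _ this n] Fe(5) obtain u where u: "hm \<le> u" "u < t" "Y u = pe" by auto
      have "0 \<le> u" using hm0 u by simp
      hence "u < hm" using Fe(6) u by auto
      thus False using u by simp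
    qed
    have YS: "Y u \<in> Sub pe" if "t \<le> u" "u < H" for u
    proof (rule ccontr)
      assume n: "Y u \<notin> Sub pe"
      from cont_exit[OF DH[OF that] _ that(1) Yt n] t0 obtain u' where "t < u'" "u' \<le> u" "Y u' = par pe" by auto
      thus False using bef[of u'] that ppe_def by auto
    qed
    have surv: "b \<in> UU H" if b: "b \<in> UU t" "fst b \<notin> Sub pe" "par (fst b) \<noteq> ppe" for b
    proof -
      obtain e' r' where bb: "b = (e',r')" by (cases b)
      show ?thesis unfolding bb
      proof (rule U_mono)
        show "(e',r') \<in> UU t" using b bb by simp
        show "t \<le> H" using tH by simp
        show "\<forall>u. t < u \<and> u \<le> H \<longrightarrow> Y u \<noteq> par e'"
        proof (intro allI impI)
          fix u assume u: "t < u \<and> u \<le> H"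
          show "Y u \<noteq> par e'"
          proof (cases "u = H")
            case True thus ?thesis using HA b bb by auto
          next
            case False hence "Y u \<in> Sub pe" using YS u by simp
            thus ?thesis using Sub_child b bb by auto
          qed
        qed
        show "\<forall>u. t \<le> u \<and> u < H \<longrightarrow> Y u \<noteq> e'" using YS b bb by auto
      qed
    qed
    have bad: "fst b = e \<or> fst b = pe" if b: "b \<in> UU t" "fst b \<in> Sub pe \<or> par (fst b) = ppe" for b
    proof -
      obtain e' r' where bb: "b = (e',r')" by (cases b)
      have bU: "(e',r') \<in> UU t" using b bb by simp
      obtain hp' hm' where F': "hh 0 {par e'} = ereal hp'" "hh 0 {e'} = ereal hm'" "0 \<le> hp'" "hp' < hm'" "hm' < t"
       "\<forall>u. 0 \<le> u \<and> u \<le> t \<longrightarrow> (Y u = par e' \<longleftrightarrow> hp' \<le> u \<and> u < hm')" "Y hm' = e'"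
       "\<forall>u. 0 \<le> u \<and> u < hm' \<longrightarrow> Y u \<noteq> e'" "e' \<noteq> rt" and ck': "\<exists>k. crossed_at par rt T B t k (e',r')"
        using U_facts[OF bU] by blast
      have hm'0: "0 \<le> hm'" using F' by simp
      show ?thesis
      proof (rule ccontr)
        assume ne: "\<not> (fst b = e \<or> fst b = pe)"
        hence ne': "e' \<noteq> e" "e' \<noteq> pe" using bb by auto
        have Dhm': "D hm'" using Du F' by simp
        show False
        proof (cases "e' \<in> Sub pe")
          case True
          show False
          proof (cases "e' \<in> Sub e")
            case True
            have "Y 0 \<notin> Sub e" using rt_Sub Fe(9) Y0 by metis
            then obtain u where u: "0 < u" "u \<le> hm'" "Y u = e"
              using cont_entry[OF Dhm' order_refl hm'0] True F'(7) by auto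
            have "hm \<le> u"
            proof (rule ccontr)
              assume "\<not> hm \<le> u" thus False using Fe(8) u by auto
            qed
            moreover have "hm \<noteq> hm'" using Fe(7) F'(7) ne' by auto
            ultimately have hlt: "hm < hm'" using u by simp
            obtain k' where ck2: "crossed_at par rt T B t k' (e',r')" using ck' by blast
            have tk': "tm k' = hm'" "J k' \<noteq> None" using crossing_time[OF bU ck2 Dt] F'(2) by auto
            have "k < k'"
            proof (rule ccontr)
              assume "\<not> k < k'" hence "k' \<le> k" by simp
              hence "tm k' \<le> tm k" using tm_mono_le tmk(2) by blast
              thus False using hlt tk' tmk by simp
            qed
            thus False using lastk ck2 bU by blast
          next
            case False
            consider "hm < hm'" | "hm' < hm" | "hm = hm'" by linarith
            thus False
            proof cases
              case 1
              have "Y hm \<in> Sub e" using Fe(7) Sub_self by simp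
              moreover have "Y hm' \<notin> Sub e" using F'(7) False by simp
              ultimately obtain u where u: "hm < u" "u \<le> hm'" "Y u = par e"
                using cont_exit[OF Dhm' hm0 less_imp_le[OF 1]] by blast
              have "u < hm" using Fe(6) u hm0 F'(5) pe_def by auto
              thus False using u by simp
            next
              case 2
              have "Y 0 \<notin> Sub pe" using rt_Sub pe_rt Y0 by metis
              then obtain u where u: "0 < u" "u \<le> hm'" "Y u = pe"
                using cont_entry[OF Dhm' order_refl hm'0] True F'(7) by auto
              have "hp \<le> u" using Fe(6) u F'(5) by auto
              moreover have "u \<noteq> hm'" using u F'(7) ne' by auto
              ultimately have "Y hm' = pe" using Fe(6) u 2 hm'0 F'(5) by auto
              thus False using F'(7) ne' by simp
            next
              case 3 thus False using Fe(7) F'(7) ne' by simp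
            qed
          qed
        next
          case False
          hence pp: "par e' = ppe" using b bb by simp
          have s1: "pe \<notin> Sub e'" using sibling_notSub[of pe e'] pp ppe_def ne' F'(9) by auto
          have s2: "e' \<notin> Sub pe" using False .
          have Yhp: "Y hp = pe" using Fe(6) Fe(3,4,5) by auto
          have Dhp: "D hp" using Du Fe by simp
          consider "hp < hm'" | "hm' < hp" | "hp = hm'" by linarith
          thus False
          proof cases
            case 1
            have "Y hp \<in> Sub pe" using Yhp Sub_self by simp
            moreover have "Y hm' \<notin> Sub pe" using F'(7) s2 by simp
            ultimately obtain u where u: "hp < u" "u \<le> hm'" "Y u = ppe"
              using cont_exit[OF Dhm' Fe(3) less_imp_le[OF 1]] pe_def ppe_def by blast
            have u2: "hp' \<le> u" "u < hm'" using F'(6) u pp Fe(3) F'(5) by auto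
            have "hp' \<le> hp"
            proof (cases "ppe = rt")
              case True
              thus ?thesis using F'(6) Y0 pp Fe(3) t0 by auto
            next
              case False
              have "Y 0 \<notin> Sub ppe" using rt_Sub False Y0 by metis
              moreover have "Y hp \<in> Sub ppe" using Yhp Sub_child Sub_self ppe_def by blast
              ultimately obtain u'' where u'': "0 < u''" "u'' \<le> hp" "Y u'' = ppe"
                using cont_entry[OF Dhp order_refl Fe(3)] by blast
              thus ?thesis using F'(6) pp Fe(4,5) by auto
            qed
            moreover have "Y hp' = ppe" using F'(3,4,5,6) pp by auto
            hence "hp' \<noteq> hp" using Yhp ppe_ne by auto
            ultimately have "hp' < hp" by simp
            hence "Y hp = ppe" using F'(6) pp Fe(3,4,5) u by auto
            thus False using Yhp ppe_ne by simp
          next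
            case 2
            have "Y hm' \<in> Sub e'" using F'(7) Sub_self by simp
            moreover have "Y hp \<notin> Sub e'" using Yhp s1 by simp
            ultimately obtain u where u: "hm' < u" "u \<le> hp" "Y u = par e'"
              using cont_exit[OF Dhp hm'0 less_imp_le[OF 2]] by blast
            have "u < hm'" using F'(6) u hm'0 Fe(4,5) by auto
            thus False using u by simp
          next
            case 3 thus False using Yhp F'(7) ne' by simp
          qed
        qed
      qed
    qed
    have uniq: "b1 = b2" if "b1 \<in> UU t" "b2 \<in> UU t" "fst b1 = fst b2" for b1 b2
      using U_unique[of "fst b1" "snd b1" t "snd b2"] that Dt by (cases b1, cases b2) auto
    obtain b0 where b0: "\<forall>b \<in> UU t. fst b = pe \<longrightarrow> b = b0"
    proof (cases "\<exists>b\<in>UU t. fst b = pe")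
      case True
      then obtain b1 where "b1 \<in> UU t" "fst b1 = pe" by blast
      thus ?thesis using that[of b1] uniq by metis
    next
      case False thus ?thesis using that by blast
    qed
    have sub: "UU t - UU H \<subseteq> {(e,r), b0}"
    proof
      fix b assume bin: "b \<in> UU t - UU H"
      hence "\<not> (fst b \<notin> Sub pe \<and> par (fst b) \<noteq> ppe)" using surv by blast
      hence "fst b = e \<or> fst b = pe" using bad bin by blast
      thus "b \<in> {(e,r), b0}" using uniq[of b "(e,r)"] eU b0 bin by auto
    qed
    have "finite {(e,r), b0}" by simp
    moreover have "card {(e,r), b0} \<le> 2" by (simp add: card_insert_if)
    ultimately show ?thesis unfolding rH using sub card_mono finite_subset by (metis order_trans)
  qed
qed

end


theorem lemma8:
  fixes par :: "'v \<Rightarrow> 'v" and rt :: 'v and T t :: real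
  assumes "rooted_tree par rt"
    and "bounded_degree par rt"
    and "at_least_two_offspring par rt"
    and "T > 0" and "t > 0"
  shows "AE \<omega> in bar_measure rt T.
    \<forall>e r. last_U par rt T (bars rt \<omega>) t (e, r) \<and> par e \<noteq> rt \<and>
          hit par rt T (bars rt \<omega>) t {par (par e)} < \<infinity> \<longrightarrow>
          (let U' = Uset par rt T (bars rt \<omega>) t -
                    Uset par rt T (bars rt \<omega>) (real_of_ereal (hit par rt T (bars rt \<omega>) t {par (par e)}))
           in finite U' \<and> card U' \<le> 2)"
proof (rule AE_I2)
  fix \<omega>
  have bn: "\<forall>b\<in>bars rt \<omega>. fst b \<noteq> rt" by (auto simp: bars_def)
  interpret MW par rt T "bars rt \<omega>" using assms(1,4) bn by unfold_locales auto
  show "\<forall>e r. last_U par rt T (bars rt \<omega>) t (e, r) \<and> par e \<noteq> rt \<and>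
          hit par rt T (bars rt \<omega>) t {par (par e)} < \<infinity> \<longrightarrow>
          (let U' = Uset par rt T (bars rt \<omega>) t -
                    Uset par rt T (bars rt \<omega>) (real_of_ereal (hit par rt T (bars rt \<omega>) t {par (par e)}))
           in finite U' \<and> card U' \<le> 2)"
    using main assms(5) unfolding Let_def by blast
qed

end
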